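(* Let $\mathcal{G}=(\mathcal{V},E)$ be an undirected graph with $\mathcal{V}=\{1,\dots,N\}$ and set of cliques $\mathcal{C}$. For each $i\in\mathcal{V}$ let $\mathcal{X}_i$ be a finite alphabet and $g_i:\mathcal{X}_i\to\mathcal{Y}_i$ a function. Let $X=(X_1,\dots,X_N)$ be a random variable on $\mathcal{X}=\prod_i\mathcal{X}_i$ with $p_X(x)>0$ for all $x\in\mathcal{X}$, and suppose there is a family of potential functions $\{\psi_C,\ C\in\mathcal{C}\}$, $\psi_C:\mathcal{X}_C\to\mathbb{R}$, with $$p_X(x)=\frac{1}{Z}\prod_{C\in\mathcal{C}}\psi_C(x)\ \text{ for all } x\in\mathcal{X},\qquad Z=\sum_{x\in\mathcal{X}}\prod_{C\in\mathcal{C}}\psi_C(x).$$ Let $Y=(g_1(X_1),\dots,g_N(X_N))=g(X)$. Assume that for every $i\in\mathcal{V}$ there is at most one clique $C\ni i$ such that $\psi_C$ strictly depends on $x_i$. For each $i$ let $C'(i)$ be that clique (or, if no potential strictly depends on $x_i$, an arbitrary clique containing $i$), and let $\mathcal{V}_1,\dots,\mathcal{V}_L$ be the partition of $\mathcal{V}$ into classes of vertices having the same $C'(i)$; write $C'(\mathcal{V}_\ell)$ for the common clique of class $\mathcal{V}_\ell$. Then $Y$ is a Markov random field on $\mathcal{G}$. Moreover, $p_Y(y)=\frac{1}{Z}\prod_{C\in\mathcal{C}}U_C(y)$ for all $y$ in the image of $g$, where the functions $U_C$ are defined by $$U_{C'(\mathcal{V}_\ell)}(g(x))=\sum_{x'_{\mathcal{V}_\ell}\in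 g_{\mathcal{V}_\ell}^{-1}(g_{\mathcal{V}_\ell}(x_{\mathcal{V}_\ell}))}\psi_{C'(\mathcal{V}_\ell)}(x'_{\mathcal{V}_\ell},x_{\mathcal{V}\setminus\mathcal{V}_\ell}),\quad \ell=1,\dots,L,$$ and $U_C(g(x))=\psi_C(x)$ for all $C\in\mathcal{C}\setminus\bigcup_{j\in\mathcal{V}}\{C'(j)\}$ (these definitions are well posed, i.e., the right-hand sides depend on $x$ only through $g(x)$).
   Context: A clique is a singleton or a set $C\subseteq\mathcal{V}$ with all pairs of its elements joined by edges. For $A\subseteq\mathcal{V}$, $x_A=(x_i,i\in A)$, $\mathcal{X}_A=\prod_{i\in A}\mathcal{X}_i$, $g_A(x_A)=(g_i(x_i),i\in A)$; a potential $\psi_A$ on $\mathcal{X}_A$ is regarded as a function on $\mathcal{X}$ via $\psi_A(x)=\psi_A(x_A)$. $X$ is a Markov random field (MRF) on $\mathcal{G}$ if for every $i$, $p_{X_i|X_{\mathcal{V}\setminus\{i\}}}=p_{X_i|X_{\mathcal{N}_i}}$, where $\mathcal{N}_i$ is the set of neighbors of $i$. For a clique $C$ containing $i$, $\psi_C$ depends on $x_i$ only via $y_i=g_i(x_i)$ if $\psi_C(x_{\mathcal{V}\setminus\{i\}},x_i)=\psi_C(x_{\mathcal{V}\setminus\{i\}},x_i')$ for all $x_{\mathcal{V}\setminus\{i\}}$ and all $x_i,x_i'$ with $g_i(x_i)=g_i(x_i')$; otherwise $\psi_C$ strictly depends on $x_i$. *)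

theory Defs
  imports Complex_Main
begin

text \<open>Vertices are the elements of a finite type 'v (so V = UNIV, N = CARD('v)).
  The graph is given by a symmetric irreflexive edge relation E.\<close>

definition is_clique :: "('v \<Rightarrow> 'v \<Rightarrow> bool) \<Rightarrow> 'v set \<Rightarrow> bool" where
  "is_clique E C \<longleftrightarrow> C \<noteq> {} \<and> (\<forall>i\<in>C. \<forall>j\<in>C. i \<noteq> j \<longrightarrow> E i j)"

definition cliques :: "('v \<Rightarrow> 'v \<Rightarrow> bool) \<Rightarrow> 'v set set" where
  "cliques E = {C. is_clique E C}"

definition configs :: "('v \<Rightarrow> 'a set) \<Rightarrow> ('v \<Rightarrow> 'a) set" where
  "configs Xs = {x. \<forall>i. x i \<in> Xs i}"

definition gmap :: "('v \<Rightarrow> 'a \<Rightarrow> 'b) \<Rightarrow> ('v \<Rightarrow> 'a) \<Rightarrow> ('v \<Rightarrow> 'b)" where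
  "gmap g x = (\<lambda>i. g i (x i))"

definition depends_only_via ::
  "('v \<Rightarrow> 'a set) \<Rightarrow> ('v \<Rightarrow> 'a \<Rightarrow> 'b) \<Rightarrow> (('v \<Rightarrow> 'a) \<Rightarrow> real) \<Rightarrow> 'v \<Rightarrow> bool" where
  "depends_only_via Xs g psi i \<longleftrightarrow>
     (\<forall>x\<in>configs Xs. \<forall>a\<in>Xs i. \<forall>a'\<in>Xs i. g i a = g i a' \<longrightarrow> psi (x(i := a)) = psi (x(i := a')))"

definition strictly_depends ::
  "('v \<Rightarrow> 'a set) \<Rightarrow> ('v \<Rightarrow> 'a \<Rightarrow> 'b) \<Rightarrow> (('v \<Rightarrow> 'a) \<Rightarrow> real) \<Rightarrow> 'v \<Rightarrow> bool" where
  "strictly_depends Xs g psi i \<longleftrightarrow> \<not> depends_only_via Xs g psi i"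

text \<open>Markov random field property for a random field whose law is given by
  P :: event \<Rightarrow> probability (events are predicates on configurations):
  p(Z_i | Z_{V - {i}}) = p(Z_i | Z_{N_i}) wherever the conditioning event has positive probability.\<close>
definition is_MRF :: "('v \<Rightarrow> 'v \<Rightarrow> bool) \<Rightarrow> ((('v \<Rightarrow> 'c) \<Rightarrow> bool) \<Rightarrow> real) \<Rightarrow> bool" where
  "is_MRF E P \<longleftrightarrow>
     (\<forall>i y. P (\<lambda>z. \<forall>j. j \<noteq> i \<longrightarrow> z j = y j) > 0 \<longrightarrow>
        P (\<lambda>z. z i = y i \<and> (\<forall>j. j \<noteq> i \<longrightarrow> z j = y j)) / P (\<lambda>z. \<forall>j. j \<noteq> i \<longrightarrow> z j = y j)
      = P (\<lambda>z. z i = y i \<and> (\<forall>j. E i j \<longrightarrow> z j = y j)) / P (\<lambda>z. \<forall>j. E i j \<longrightarrow> z j = y j))"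

definition law_Y :: "('v \<Rightarrow> 'a set) \<Rightarrow> ('v \<Rightarrow> 'a \<Rightarrow> 'b) \<Rightarrow> (('v \<Rightarrow> 'a) \<Rightarrow> real)
    \<Rightarrow> (('v \<Rightarrow> 'b) \<Rightarrow> bool) \<Rightarrow> real" where
  "law_Y Xs g p A = (\<Sum>x\<in>configs Xs. if A (gmap g x) then p x else 0)"

definition pmf_Y :: "('v \<Rightarrow> 'a set) \<Rightarrow> ('v \<Rightarrow> 'a \<Rightarrow> 'b) \<Rightarrow> (('v \<Rightarrow> 'a) \<Rightarrow> real)
    \<Rightarrow> ('v \<Rightarrow> 'b) \<Rightarrow> real" where
  "pmf_Y Xs g p y = law_Y Xs g p (\<lambda>z. z = y)"

end

theory Submission
  imports Defs "HOL-Library.FuncSet"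
begin


lemma configs_upd: "x \<in> configs Xs \<Longrightarrow> a \<in> Xs j \<Longrightarrow> x(j := a) \<in> configs Xs"
  by (simp add: configs_def)

lemma finite_configs:
  assumes "\<And>i. finite (Xs i)"
  shows "finite (configs (Xs :: 'v::finite \<Rightarrow> 'a set))"
proof -
  have "configs Xs = PiE UNIV Xs" by (auto simp: configs_def PiE_def Pi_def extensional_def)
  then show ?thesis using assms by (simp add: finite_PiE)
qed

lemma chg:
  fixes f :: "('v::finite \<Rightarrow> 'a) \<Rightarrow> real"
  assumes x: "x \<in> configs Xs" and x': "x' \<in> configs Xs"
   and c: "\<And>j. x j \<noteq> x' j \<Longrightarrow> (g j (x j) = g j (x' j) \<and> depends_only_via Xs g f j) \<or>
            (\<forall>w\<in>configs Xs. \<forall>a\<in>Xs j. \<forall>a'\<in>Xs j. f (w(j:=a)) = f (w(j:=a')))"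
  shows "f x = f x'"
proof -
  define cond where "cond = (\<lambda>(x::'v \<Rightarrow> 'a) j. (g j (x j) = g j (x' j) \<and> depends_only_via Xs g f j) \<or>
            (\<forall>w\<in>configs Xs. \<forall>a\<in>Xs j. \<forall>a'\<in>Xs j. f (w(j:=a)) = f (w(j:=a'))))"
  have "\<forall>x. x \<in> configs Xs \<longrightarrow> {j. x j \<noteq> x' j} \<subseteq> D \<longrightarrow> (\<forall>j. x j \<noteq> x' j \<longrightarrow> cond x j) \<longrightarrow> f x = f x'"
    if "finite D" for D
    using that
  proof (induction D rule: finite_induct)
    case empty
    then show ?case by (auto intro!: arg_cong[where f=f] ext)
  next
    case (insert k D)
    show ?case
    proof (intro allI impI)
      fix x assume xc: "x \<in> configs Xs" and sub: "{j. x j \<noteq> x' j} \<subseteq> insert k D"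
        and cx: "\<forall>j. x j \<noteq> x' j \<longrightarrow> cond x j"
      define x1 where "x1 = x(k := x' k)"
      have x1c: "x1 \<in> configs Xs" using x' xc by (simp add: x1_def configs_def)
      have "{j. x1 j \<noteq> x' j} \<subseteq> D" using sub by (auto simp: x1_def)
      moreover have "\<forall>j. x1 j \<noteq> x' j \<longrightarrow> cond x1 j"
        using cx by (auto simp: x1_def cond_def)
      ultimately have e1: "f x1 = f x'" using insert.IH x1c by blast
      have "f x = f x1"
      proof (cases "x k = x' k")
        case True
        then have "x1 = x" by (auto simp: x1_def)
        then show ?thesis by simp
      next
        case False
        then have ck: "cond x k" using cx by blast
        have xk: "x k \<in> Xs k" "x' k \<in> Xs k" using xc x' by (auto simp: configs_def)
        from ck show ?thesis
        proof (unfold cond_def, elim disjE conjE)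
          assume "g k (x k) = g k (x' k)" "depends_only_via Xs g f k"
          then have "f (x(k := x k)) = f (x(k := x' k))"
            using xc xk unfolding depends_only_via_def by blast
          then show ?thesis by (simp add: x1_def)
        next
          assume "\<forall>w\<in>configs Xs. \<forall>a\<in>Xs k. \<forall>a'\<in>Xs k. f (w(k := a)) = f (w(k := a'))"
          then have "f (x(k := x k)) = f (x(k := x' k))"
            using xc xk by blast
          then show ?thesis by (simp add: x1_def)
        qed
      qed
      with e1 show "f x = f x'" by simp
    qed
  qed
  then show ?thesis using x c by (auto simp: cond_def)
qed



lemma markov_generic:
  fixes Ys :: "'v::finite \<Rightarrow> 'b set" and q A B :: "('v \<Rightarrow> 'b) \<Rightarrow> real"
    and S :: "(('v \<Rightarrow> 'b) \<Rightarrow> bool) \<Rightarrow> real"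
  assumes fin: "\<And>j. finite (Ys j)"
    and irr: "\<not> E i i"
    and qpos: "\<And>z. z \<in> configs Ys \<Longrightarrow> q z > 0"
    and fac: "\<And>z. z \<in> configs Ys \<Longrightarrow> q z = A z * B z"
    and Aloc: "\<And>z z'. z \<in> configs Ys \<Longrightarrow> z' \<in> configs Ys \<Longrightarrow> z' i = z i \<Longrightarrow>
                 (\<forall>j. E i j \<longrightarrow> z' j = z j) \<Longrightarrow> A z = A z'"
    and Bloc: "\<And>z z'. z \<in> configs Ys \<Longrightarrow> z' \<in> configs Ys \<Longrightarrow> (\<forall>j. j \<noteq> i \<longrightarrow> z' j = z j) \<Longrightarrow> B z = B z'"
    and Sdef: "\<And>P. S P = (\<Sum>z\<in>configs Ys. if P z then q z else 0)"
    and Spos: "S (\<lambda>z. \<forall>j. j \<noteq> i \<longrightarrow> z j = y j) > 0"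
  shows "S (\<lambda>z. z i = y i \<and> (\<forall>j. j \<noteq> i \<longrightarrow> z j = y j)) / S (\<lambda>z. \<forall>j. j \<noteq> i \<longrightarrow> z j = y j)
       = S (\<lambda>z. z i = y i \<and> (\<forall>j. E i j \<longrightarrow> z j = y j)) / S (\<lambda>z. \<forall>j. E i j \<longrightarrow> z j = y j)"
proof -
  let ?Y = "configs Ys"
  have finY: "finite ?Y" using fin by (rule finite_configs)
  obtain z0 where z0: "z0 \<in> ?Y" "\<forall>j. j \<noteq> i \<longrightarrow> z0 j = y j"
  proof (rule ccontr)
    assume "\<not> thesis"
    with that have "\<forall>z\<in>?Y. \<not> (\<forall>j. j \<noteq> i \<longrightarrow> z j = y j)" by blast
    then have "S (\<lambda>z. \<forall>j. j \<noteq> i \<longrightarrow> z j = y j) = 0" unfolding Sdef by (intro sum.neutral) auto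
    with Spos show False by simp
  qed
  define a0 where "a0 = z0 i"
  have a0: "a0 \<in> Ys i" using z0 by (simp add: a0_def configs_def)
  have z0y: "z0 = y(i := a0)" using z0 by (auto simp: a0_def)
  have yY: "\<And>a. a \<in> Ys i \<Longrightarrow> y(i := a) \<in> ?Y"
    using z0 by (auto simp: configs_def) (metis)
  define Af where "Af a = A (y(i := a))" for a
  define b0 where "b0 = B z0"
  define T where "T = {z\<in>?Y. \<forall>j. E i j \<longrightarrow> z j = y j}"
  define W where "W = {w\<in>T. w i = a0}"
  define R where "R = {z\<in>?Y. \<forall>j. j \<noteq> i \<longrightarrow> z j = y j}"
  define SA where "SA = (\<Sum>a\<in>Ys i. Af a)"
  define SB where "SB = (\<Sum>w\<in>W. B w)"
  define ind where "ind = (if y i \<in> Ys i then Af (y i) else 0)"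
  have finW: "finite W" using finY by (simp add: W_def T_def)
  have irr': "\<And>j. E i j \<Longrightarrow> j \<noteq> i" using irr by auto
  have rest: "(\<Sum>z\<in>R. c (z i) * q z) = (\<Sum>a\<in>Ys i. c a * Af a) * b0" for c :: "'b \<Rightarrow> real"
  proof -
    have "(\<Sum>z\<in>R. c (z i) * q z) = (\<Sum>a\<in>Ys i. c a * Af a * b0)"
    proof (rule sum.reindex_bij_witness[where i="\<lambda>a. y(i:=a)" and j="\<lambda>z. z i"])
      fix z assume "z \<in> R"
      then show "y(i := z i) = z" by (auto simp: R_def)
    next
      fix z assume "z \<in> R"
      then show "z i \<in> Ys i" by (auto simp: R_def configs_def)
    next
      fix a assume "a \<in> Ys i" then show "(y(i := a)) i = a" by simp
    next
      fix a assume "a \<in> Ys i" then show "y(i := a) \<in> R" using yY by (auto simp: R_def)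
    next
      fix z assume zR: "z \<in> R"
      then have zy: "z = y(i := z i)" and zY: "z \<in> ?Y" by (auto simp: R_def)
      have "q z = A z * B z" using fac zY by simp
      also have "B z = b0" unfolding b0_def using Bloc[OF z0(1) zY] zR z0 by (auto simp: R_def)
      also have "A z = Af (z i)" unfolding Af_def using zy by simp
      finally show "c (z i) * Af (z i) * b0 = c (z i) * q z" by simp
    qed
    then show ?thesis by (simp add: sum_distrib_right)
  qed
  have nbr: "(\<Sum>z\<in>T. c (z i) * q z) = (\<Sum>a\<in>Ys i. c a * Af a) * SB" for c :: "'b \<Rightarrow> real"
  proof -
    have "(\<Sum>z\<in>T. c (z i) * q z) = (\<Sum>(a,w)\<in>Ys i \<times> W. c a * Af a * B w)"
    proof (rule sum.reindex_bij_witness[where i="\<lambda>(a,w). w(i:=a)" and j="\<lambda>z. (z i, z(i:=a0))"])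
      fix z assume "z \<in> T"
      then show "(case (z i, z(i := a0)) of (a, w) \<Rightarrow> w(i := a)) = z" by auto
    next
      fix z assume "z \<in> T"
      then show "(z i, z(i := a0)) \<in> Ys i \<times> W" using a0 irr'
        by (auto simp: T_def W_def configs_def)
    next
      fix aw assume "aw \<in> Ys i \<times> W"
      then show "(\<lambda>z. (z i, z(i:=a0))) ((\<lambda>(a,w). w(i:=a)) aw) = aw"
        by (cases aw) (auto simp: W_def)
    next
      fix aw assume "aw \<in> Ys i \<times> W"
      then show "(\<lambda>(a,w). w(i:=a)) aw \<in> T" using irr'
        by (cases aw) (auto simp: T_def W_def configs_def)
    next
      fix z assume zT: "z \<in> T"
      then have zY: "z \<in> ?Y" by (simp add: T_def)
      have z1Y: "z(i := a0) \<in> ?Y" using zY a0 by (simp add: configs_upd)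
      have ziY: "z i \<in> Ys i" using zY by (simp add: configs_def)
      have "q z = A z * B z" using fac zY by simp
      also have "B z = B (z(i := a0))" using Bloc[OF zY z1Y] by auto
      also have "A z = Af (z i)" unfolding Af_def
        using Aloc[OF zY yY[OF ziY]] zT irr' by (auto simp: T_def)
      finally have qz: "q z = Af (z i) * B (z(i := a0))" .
      show "(case (z i, z(i := a0)) of (a, w) \<Rightarrow> c a * Af a * B w) = c (z i) * q z"
        by (simp only: prod.case qz mult.assoc)
    qed
    also have "\<dots> = (\<Sum>a\<in>Ys i. \<Sum>w\<in>W. c a * Af a * B w)"
      by (simp add: sum.cartesian_product)
    also have "\<dots> = (\<Sum>a\<in>Ys i. c a * Af a) * SB"
      by (simp add: SB_def sum_product)
    finally show ?thesis .
  qed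
  have Sset: "S P = sum q {z\<in>?Y. P z}" for P
    unfolding Sdef using finY by (simp add: sum.inter_filter)
  have finR: "finite R" using finY by (simp add: R_def)
  have finT: "finite T" using finY by (simp add: T_def)
  have indsum: "(\<Sum>a\<in>Ys i. (if a = y i then 1 else 0) * Af a) = ind"
    by (subst sum.cong[OF refl, of _ _ "\<lambda>a. if y i = a then Af a else 0"]) (auto simp: ind_def fin)
  have S1: "S (\<lambda>z. \<forall>j. j \<noteq> i \<longrightarrow> z j = y j) = SA * b0"
  proof -
    have "S (\<lambda>z. \<forall>j. j \<noteq> i \<longrightarrow> z j = y j) = (\<Sum>z\<in>R. (\<lambda>_. 1) (z i) * q z)"
      by (simp add: Sset R_def)
    then show ?thesis using rest[of "\<lambda>_. 1"] by (simp add: SA_def)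
  qed
  have S2: "S (\<lambda>z. z i = y i \<and> (\<forall>j. j \<noteq> i \<longrightarrow> z j = y j)) = ind * b0"
  proof -
    have "S (\<lambda>z. z i = y i \<and> (\<forall>j. j \<noteq> i \<longrightarrow> z j = y j)) = sum q {z\<in>R. z i = y i}"
      unfolding Sset by (rule arg_cong[where f="sum q"]) (auto simp: R_def)
    also have "\<dots> = (\<Sum>z\<in>R. (\<lambda>a. if a = y i then 1 else 0) (z i) * q z)"
      using finR by (simp add: sum.inter_filter) (intro sum.cong; simp)
    also have "\<dots> = (\<Sum>a\<in>Ys i. (\<lambda>a. if a = y i then 1 else 0) a * Af a) * b0" by (rule rest)
    also have "\<dots> = ind * b0" using indsum by simp
    finally show ?thesis .
  qed
  have S3: "S (\<lambda>z. \<forall>j. E i j \<longrightarrow> z j = y j) = SA * SB"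
  proof -
    have "S (\<lambda>z. \<forall>j. E i j \<longrightarrow> z j = y j) = (\<Sum>z\<in>T. (\<lambda>_. 1) (z i) * q z)"
      by (simp add: Sset T_def)
    then show ?thesis using nbr[of "\<lambda>_. 1"] by (simp add: SA_def)
  qed
  have S4: "S (\<lambda>z. z i = y i \<and> (\<forall>j. E i j \<longrightarrow> z j = y j)) = ind * SB"
  proof -
    have "S (\<lambda>z. z i = y i \<and> (\<forall>j. E i j \<longrightarrow> z j = y j)) = sum q {z\<in>T. z i = y i}"
      unfolding Sset by (rule arg_cong[where f="sum q"]) (auto simp: T_def)
    also have "\<dots> = (\<Sum>z\<in>T. (\<lambda>a. if a = y i then 1 else 0) (z i) * q z)"
      using finT by (simp add: sum.inter_filter) (intro sum.cong; simp)
    also have "\<dots> = (\<Sum>a\<in>Ys i. (\<lambda>a. if a = y i then 1 else 0) a * Af a) * SB" by (rule nbr)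
    also have "\<dots> = ind * SB" using indsum by simp
    finally show ?thesis .
  qed
  have "q z0 > 0" using qpos z0 by simp
  then have b0nz: "b0 \<noteq> 0" using fac[OF z0(1)] by (auto simp: b0_def)
  have z0T: "z0 \<in> T" using z0 irr' by (auto simp: T_def)
  have "sum q T > 0"
    by (rule sum_pos2[OF finT z0T]) (use qpos z0 in \<open>auto simp: T_def less_imp_le\<close>)
  moreover have "sum q T = S (\<lambda>z. \<forall>j. E i j \<longrightarrow> z j = y j)" by (simp add: Sset T_def)
  ultimately have "SA * SB > 0" using S3 by simp
  then have SBnz: "SB \<noteq> 0" by auto
  show ?thesis unfolding S1 S2 S3 S4 using b0nz SBnz by simp
qed


locale setting =
  fixes E :: "'v::finite \<Rightarrow> 'v \<Rightarrow> bool"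
    and Xs :: "'v \<Rightarrow> 'a set"
    and g :: "'v \<Rightarrow> 'a \<Rightarrow> 'b"
    and psi :: "'v set \<Rightarrow> ('v \<Rightarrow> 'a) \<Rightarrow> real"
    and Cp :: "'v \<Rightarrow> 'v set"
  assumes fin: "\<And>i. finite (Xs i)"
    and psi_local: "\<And>C x x'. C \<in> cliques E \<Longrightarrow> x \<in> configs Xs \<Longrightarrow> x' \<in> configs Xs \<Longrightarrow>
                      (\<forall>j\<in>C. x j = x' j) \<Longrightarrow> psi C x = psi C x'"
    and Cp_clique: "\<And>i. Cp i \<in> cliques E \<and> i \<in> Cp i"
    and Cp_strict: "\<And>i C. C \<in> cliques E \<Longrightarrow> i \<in> C \<Longrightarrow> strictly_depends Xs g (psi C) i \<Longrightarrow> Cp i = C"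
begin

definition Fib :: "'v set \<Rightarrow> ('v \<Rightarrow> 'a) \<Rightarrow> ('v \<Rightarrow> 'a) set" where
  "Fib C x = {x''\<in>configs Xs. (\<forall>j. Cp j \<noteq> C \<longrightarrow> x'' j = x j) \<and> (\<forall>j. Cp j = C \<longrightarrow> g j (x'' j) = g j (x j))}"

definition U :: "'v set \<Rightarrow> ('v \<Rightarrow> 'b) \<Rightarrow> real" where
  "U C y = (let x = (SOME x. x \<in> configs Xs \<and> gmap g x = y) in
              if C \<in> range Cp then sum (psi C) (Fib C x) else psi C x)"

lemma finX: "finite (configs Xs)" using fin by (rule finite_configs)

lemma psi_eq:
  assumes C: "C \<in> cliques E" and x: "x \<in> configs Xs" and x': "x' \<in> configs Xs"
    and d: "\<And>j. x j \<noteq> x' j \<Longrightarrow> j \<notin> C \<or> (Cp j \<noteq> C \<and> g j (x j) = g j (x' j))"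
  shows "psi C x = psi C x'"
proof (rule chg[OF x x'])
  fix j assume "x j \<noteq> x' j"
  then consider "j \<notin> C" | "Cp j \<noteq> C" "g j (x j) = g j (x' j)" "j \<in> C" using d by blast
  then show "(g j (x j) = g j (x' j) \<and> depends_only_via Xs g (psi C) j) \<or>
      (\<forall>w\<in>configs Xs. \<forall>a\<in>Xs j. \<forall>a'\<in>Xs j. psi C (w(j := a)) = psi C (w(j := a')))"
  proof cases
    case 1
    have "\<forall>w\<in>configs Xs. \<forall>a\<in>Xs j. \<forall>a'\<in>Xs j. psi C (w(j := a)) = psi C (w(j := a'))"
      using 1 by (auto intro!: psi_local[OF C] configs_upd)
    then show ?thesis by blast
  next
    case 2
    then have "depends_only_via Xs g (psi C) j"
      using Cp_strict[OF C] unfolding strictly_depends_def by blast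
    then show ?thesis using 2 by blast
  qed
qed

lemma gmap_eqD: "gmap g a = gmap g b \<Longrightarrow> g j (a j) = g j (b j)"
  unfolding gmap_def by (drule fun_cong[of _ _ j]) simp

lemma K_sub: "Cp j = C \<Longrightarrow> j \<in> C" using Cp_clique by blast

lemma WP:
  assumes C: "C \<in> cliques E" and x: "x \<in> configs Xs" and x0: "x0 \<in> configs Xs"
    and agr: "\<forall>j\<in>C. g j (x j) = g j (x0 j)"
  shows "sum (psi C) (Fib C x0) = sum (psi C) (Fib C x)"
proof (rule sum.reindex_bij_witness[where j="\<lambda>x''. (\<lambda>j. if Cp j = C then x'' j else x j)"
      and i="\<lambda>x''. (\<lambda>j. if Cp j = C then x'' j else x0 j)"])
  fix a assume "a \<in> Fib C x0"
  then show "(\<lambda>j. if Cp j = C then (if Cp j = C then a j else x j) else x0 j) = a"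
    by (auto simp: Fib_def)
next
  fix a assume "a \<in> Fib C x0"
  then show "(\<lambda>j. if Cp j = C then a j else x j) \<in> Fib C x"
    using x agr K_sub by (auto simp: Fib_def configs_def)
next
  fix b assume "b \<in> Fib C x"
  then show "(\<lambda>j. if Cp j = C then (if Cp j = C then b j else x0 j) else x j) = b"
    by (auto simp: Fib_def)
next
  fix b assume "b \<in> Fib C x"
  then show "(\<lambda>j. if Cp j = C then b j else x0 j) \<in> Fib C x0"
    using x0 agr K_sub by (auto simp: Fib_def configs_def)
next
  fix a assume a: "a \<in> Fib C x0"
  then have ac: "a \<in> configs Xs" by (simp add: Fib_def)
  have c2: "(\<lambda>j. if Cp j = C then a j else x j) \<in> configs Xs" using ac x by (auto simp: configs_def)
  show "psi C (\<lambda>j. if Cp j = C then a j else x j) = psi C a"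
    by (rule psi_eq[OF C c2 ac]) (use a agr in \<open>auto simp: Fib_def split: if_splits\<close>)
qed

lemma some_pre:
  assumes "x \<in> configs Xs"
  defines "x0 \<equiv> SOME x0. x0 \<in> configs Xs \<and> gmap g x0 = gmap g x"
  shows "x0 \<in> configs Xs \<and> gmap g x0 = gmap g x"
  unfolding x0_def by (rule someI[of _ x]) (use assms in auto)

lemma U_Cp:
  assumes x: "x \<in> configs Xs" and C: "C \<in> range Cp"
  shows "U C (gmap g x) = sum (psi C) (Fib C x)"
proof -
  define x0 where "x0 = (SOME x0. x0 \<in> configs Xs \<and> gmap g x0 = gmap g x)"
  have x0: "x0 \<in> configs Xs" "gmap g x0 = gmap g x" using some_pre[OF x] by (auto simp: x0_def)
  have Cc: "C \<in> cliques E" using C Cp_clique by auto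
  have "U C (gmap g x) = sum (psi C) (Fib C x0)" using C by (simp add: U_def x0_def[symmetric])
  also have "\<dots> = sum (psi C) (Fib C x)"
    by (rule WP[OF Cc x x0(1)]) (use gmap_eqD[OF x0(2)] in auto)
  finally show ?thesis .
qed

lemma U_nCp:
  assumes x: "x \<in> configs Xs" and Cc: "C \<in> cliques E" and C: "C \<notin> range Cp"
  shows "U C (gmap g x) = psi C x"
proof -
  define x0 where "x0 = (SOME x0. x0 \<in> configs Xs \<and> gmap g x0 = gmap g x)"
  have x0: "x0 \<in> configs Xs" "gmap g x0 = gmap g x" using some_pre[OF x] by (auto simp: x0_def)
  have "U C (gmap g x) = psi C x0" using C by (simp add: U_def x0_def[symmetric])
  also have "\<dots> = psi C x"
    by (rule psi_eq[OF Cc x0(1) x]) (use gmap_eqD[OF x0(2)] C in auto)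
  finally show ?thesis .
qed

lemma U_loc:
  assumes Cc: "C \<in> cliques E" and x: "x \<in> configs Xs" and x': "x' \<in> configs Xs"
    and agr: "\<forall>j\<in>C. g j (x j) = g j (x' j)"
  shows "U C (gmap g x) = U C (gmap g x')"
proof (cases "C \<in> range Cp")
  case True
  then show ?thesis using U_Cp[OF x True] U_Cp[OF x' True] WP[OF Cc x' x] agr by simp
next
  case False
  then show ?thesis using U_nCp[OF x Cc False] U_nCp[OF x' Cc False]
      psi_eq[OF Cc x x'] agr by auto
qed

lemma fin_cl: "finite (cliques E)" by simp

lemma prod_formula:
  assumes x: "x \<in> configs Xs"
  shows "(\<Sum>x'\<in>{x'\<in>configs Xs. gmap g x' = gmap g x}. \<Prod>C\<in>cliques E. psi C x')
         = (\<Prod>C\<in>cliques E. U C (gmap g x))"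
proof -
  let ?F = "{x'\<in>configs Xs. gmap g x' = gmap g x}"
  let ?R = "range Cp"
  let ?O = "cliques E - range Cp"
  have Rsub: "?R \<subseteq> cliques E" using Cp_clique by auto
  have finR: "finite ?R" by simp
  define KO where "KO = (\<Prod>C\<in>?O. U C (gmap g x))"
  define phi where "phi = (\<lambda>x' C. (\<lambda>j. if Cp j = C then x' j else x j))"
  have split: "(\<Prod>C\<in>cliques E. h C) = (\<Prod>C\<in>?O. h C) * (\<Prod>C\<in>?R. h C)" for h :: "'v set \<Rightarrow> real"
    by (rule prod.subset_diff[OF Rsub fin_cl])
  have step1: "(\<Prod>C\<in>cliques E. psi C x') = KO * (\<Prod>C\<in>?R. psi C (phi x' C))" if x': "x' \<in> ?F" for x'
  proof -
    have x'c: "x' \<in> configs Xs" and gx: "gmap g x' = gmap g x" using x' by auto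
    have "(\<Prod>C\<in>?O. psi C x') = KO" unfolding KO_def
      by (rule prod.cong[OF refl]) (use U_nCp[OF x'c] gx in auto)
    moreover have "(\<Prod>C\<in>?R. psi C x') = (\<Prod>C\<in>?R. psi C (phi x' C))"
    proof (rule prod.cong[OF refl])
      fix C assume C: "C \<in> ?R"
      then have Cc: "C \<in> cliques E" using Rsub by auto
      have pc: "phi x' C \<in> configs Xs" using x'c x by (auto simp: phi_def configs_def)
      show "psi C x' = psi C (phi x' C)"
        by (rule psi_eq[OF Cc x'c pc]) (auto simp: phi_def gmap_eqD[OF gx] split: if_splits)
    qed
    ultimately show ?thesis using split[of "\<lambda>C. psi C x'"] by simp
  qed
  have "(\<Sum>x'\<in>?F. \<Prod>C\<in>cliques E. psi C x') = (\<Sum>x'\<in>?F. KO * (\<Prod>C\<in>?R. psi C (phi x' C)))"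
    by (rule sum.cong[OF refl]) (rule step1)
  also have "\<dots> = KO * (\<Sum>x'\<in>?F. \<Prod>C\<in>?R. psi C (phi x' C))" by (simp add: sum_distrib_left)
  also have "(\<Sum>x'\<in>?F. \<Prod>C\<in>?R. psi C (phi x' C)) = (\<Sum>f\<in>PiE ?R (\<lambda>C. Fib C x). \<Prod>C\<in>?R. psi C (f C))"
  proof (rule sum.reindex_bij_witness[where j="\<lambda>x'. restrict (phi x') ?R" and i="\<lambda>f. (\<lambda>j. f (Cp j) j)"])
    fix a assume "a \<in> ?F"
    then show "(\<lambda>j. restrict (phi a) ?R (Cp j) j) = a" by (auto simp: phi_def)
  next
    fix a assume a: "a \<in> ?F"
    then show "restrict (phi a) ?R \<in> PiE ?R (\<lambda>C. Fib C x)"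
      using x gmap_eqD[of a x] by (auto simp: phi_def Fib_def configs_def)
  next
    fix b assume b: "b \<in> PiE ?R (\<lambda>C. Fib C x)"
    show "restrict (phi (\<lambda>j. b (Cp j) j)) ?R = b"
    proof (rule ext)
      fix C show "restrict (phi (\<lambda>j. b (Cp j) j)) ?R C = b C"
      proof (cases "C \<in> ?R")
        case True
        then have "b C \<in> Fib C x" using b by auto
        then show ?thesis using True by (auto simp: phi_def Fib_def)
      next
        case False
        then show ?thesis using b by (auto simp: PiE_def extensional_def)
      qed
    qed
  next
    fix b assume b: "b \<in> PiE ?R (\<lambda>C. Fib C x)"
    have "b (Cp j) \<in> Fib (Cp j) x" for j using b by auto
    then show "(\<lambda>j. b (Cp j) j) \<in> ?F"
      by (auto simp: Fib_def configs_def gmap_def)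
  next
    fix a assume "a \<in> ?F"
    show "(\<Prod>C\<in>?R. psi C (restrict (phi a) ?R C)) = (\<Prod>C\<in>?R. psi C (phi a C))"
      by (rule prod.cong) auto
  qed
  also have "\<dots> = (\<Prod>C\<in>?R. \<Sum>x''\<in>Fib C x. psi C x'')"
    by (rule prod_sum_PiE[symmetric]) (use finX in \<open>auto simp: Fib_def\<close>)
  also have "\<dots> = (\<Prod>C\<in>?R. U C (gmap g x))"
    by (rule prod.cong[OF refl]) (simp add: U_Cp[OF x])
  finally show ?thesis using split[of "\<lambda>C. U C (gmap g x)"] by (simp add: KO_def)
qed

lemma U_locY:
  assumes Cc: "C \<in> cliques E" and z: "z \<in> gmap g ` configs Xs" and z': "z' \<in> gmap g ` configs Xs"
    and agr: "\<forall>j\<in>C. z j = z' j"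
  shows "U C z = U C z'"
proof -
  obtain x x' where x: "x \<in> configs Xs" "z = gmap g x" and x': "x' \<in> configs Xs" "z' = gmap g x'"
    using z z' by blast
  show ?thesis using U_loc[OF Cc x(1) x'(1)] agr x x' by (auto simp: gmap_def)
qed

end


lemma Yeq: "gmap g ` configs Xs = configs (\<lambda>j. g j ` Xs j)"
proof
  show "gmap g ` configs Xs \<subseteq> configs (\<lambda>j. g j ` Xs j)" by (auto simp: configs_def gmap_def)
next
  show "configs (\<lambda>j. g j ` Xs j) \<subseteq> gmap g ` configs Xs"
  proof
    fix z assume z: "z \<in> configs (\<lambda>j. g j ` Xs j)"
    define x where "x j = (SOME a. a \<in> Xs j \<and> g j a = z j)" for j
    have "x j \<in> Xs j \<and> g j (x j) = z j" for j
      unfolding x_def by (rule someI_ex) (use z in \<open>force simp: configs_def\<close>)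
    then have "x \<in> configs Xs" "gmap g x = z" by (auto simp: configs_def gmap_def)
    then show "z \<in> gmap g ` configs Xs" by blast
  qed
qed

theorem proposition1:
  fixes E :: "'v::finite \<Rightarrow> 'v \<Rightarrow> bool"
    and Xs :: "'v \<Rightarrow> 'a set"
    and g :: "'v \<Rightarrow> 'a \<Rightarrow> 'b"
    and p :: "('v \<Rightarrow> 'a) \<Rightarrow> real"
    and psi :: "'v set \<Rightarrow> ('v \<Rightarrow> 'a) \<Rightarrow> real"
    and Z :: real
    and Cp :: "'v \<Rightarrow> 'v set"
  assumes sym: "\<And>i j. E i j \<Longrightarrow> E j i"
    and irrefl: "\<And>i. \<not> E i i"
    and fin: "\<And>i. finite (Xs i)"
    and psi_local: "\<And>C x x'. C \<in> cliques E \<Longrightarrow> x \<in> configs Xs \<Longrightarrow> x' \<in> configs Xs \<Longrightarrow>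
                      (\<forall>j\<in>C. x j = x' j) \<Longrightarrow> psi C x = psi C x'"
    and pos: "\<And>x. x \<in> configs Xs \<Longrightarrow> p x > 0"
    and Z_def: "Z = (\<Sum>x\<in>configs Xs. \<Prod>C\<in>cliques E. psi C x)"
    and gibbs: "\<And>x. x \<in> configs Xs \<Longrightarrow> p x = (\<Prod>C\<in>cliques E. psi C x) / Z"
    and at_most_one: "\<And>i C1 C2. C1 \<in> cliques E \<Longrightarrow> C2 \<in> cliques E \<Longrightarrow> i \<in> C1 \<Longrightarrow> i \<in> C2 \<Longrightarrow>
                        strictly_depends Xs g (psi C1) i \<Longrightarrow> strictly_depends Xs g (psi C2) i \<Longrightarrow> C1 = C2"
    and Cp_clique: "\<And>i. Cp i \<in> cliques E \<and> i \<in> Cp i"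
    and Cp_strict: "\<And>i C. C \<in> cliques E \<Longrightarrow> i \<in> C \<Longrightarrow> strictly_depends Xs g (psi C) i \<Longrightarrow> Cp i = C"
  shows "is_MRF E (law_Y Xs g p) \<and>
    (\<exists>U :: 'v set \<Rightarrow> ('v \<Rightarrow> 'b) \<Rightarrow> real.
       (\<forall>i. \<forall>x\<in>configs Xs.
          U (Cp i) (gmap g x) =
            (\<Sum>x''\<in>{x''\<in>configs Xs. (\<forall>j. Cp j \<noteq> Cp i \<longrightarrow> x'' j = x j) \<and>
                                    (\<forall>j. Cp j = Cp i \<longrightarrow> g j (x'' j) = g j (x j))}.
               psi (Cp i) x'')) \<and>
       (\<forall>C\<in>cliques E - range Cp. \<forall>x\<in>configs Xs. U C (gmap g x) = psi C x) \<and>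
       (\<forall>y\<in>gmap g ` configs Xs. pmf_Y Xs g p y = (\<Prod>C\<in>cliques E. U C y) / Z))"
proof -
  interpret S: setting E Xs g psi Cp
    by (rule setting.intro[OF fin psi_local Cp_clique Cp_strict])
  let ?Ys = "\<lambda>j. g j ` Xs j"
  let ?F = "\<lambda>x. {x'\<in>configs Xs. gmap g x' = gmap g x}"
  have pmf_sum: "pmf_Y Xs g p z = sum p {x'\<in>configs Xs. gmap g x' = z}" for z
    unfolding pmf_Y_def law_Y_def using S.finX by (simp add: sum.inter_filter)
  have pmfY: "pmf_Y Xs g p (gmap g x) = (\<Prod>C\<in>cliques E. S.U C (gmap g x)) / Z" if x: "x \<in> configs Xs" for x
  proof -
    have "pmf_Y Xs g p (gmap g x) = (\<Sum>x'\<in>?F x. (\<Prod>C\<in>cliques E. psi C x') / Z)"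
      unfolding pmf_sum by (rule sum.cong) (auto simp: gibbs)
    also have "\<dots> = (\<Sum>x'\<in>?F x. \<Prod>C\<in>cliques E. psi C x') / Z" by (simp add: sum_divide_distrib)
    also have "\<dots> = (\<Prod>C\<in>cliques E. S.U C (gmap g x)) / Z" using S.prod_formula[OF x] by simp
    finally show ?thesis .
  qed
  have lawY: "law_Y Xs g p P = (\<Sum>z\<in>configs ?Ys. if P z then pmf_Y Xs g p z else 0)" for P
  proof -
    have "law_Y Xs g p P = (\<Sum>z\<in>gmap g ` configs Xs.
            \<Sum>x\<in>{x. x \<in> configs Xs \<and> gmap g x = z}. if P (gmap g x) then p x else 0)"
      unfolding law_Y_def by (rule sum.image_gen[OF S.finX])
    also have "\<dots> = (\<Sum>z\<in>gmap g ` configs Xs. if P z then pmf_Y Xs g p z else 0)"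
      proof (rule sum.cong[OF refl])
      fix z assume "z \<in> gmap g ` configs Xs"
      show "(\<Sum>x\<in>{x. x \<in> configs Xs \<and> gmap g x = z}. if P (gmap g x) then p x else 0) =
            (if P z then pmf_Y Xs g p z else 0)"
      proof (cases "P z")
        case True
        have "(\<Sum>x\<in>{x. x \<in> configs Xs \<and> gmap g x = z}. if P (gmap g x) then p x else 0) =
              (\<Sum>x\<in>{x. x \<in> configs Xs \<and> gmap g x = z}. p x)"
          by (rule sum.cong[OF refl]) (use True in auto)
        then show ?thesis using True by (simp add: pmf_sum)
      next
        case False
        then show ?thesis by (simp add: sum.neutral)
      qed
    qed
    finally show ?thesis by (simp add: Yeq)
  qed
  have qpos: "pmf_Y Xs g p z > 0" if "z \<in> configs ?Ys" for z
  proof -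
    have "z \<in> gmap g ` configs Xs" unfolding Yeq by (rule that)
    then obtain x where x: "x \<in> configs Xs" "z = gmap g x" by blast
    show ?thesis unfolding pmf_sum
      proof (rule sum_pos2)
      show "finite {x' \<in> configs Xs. gmap g x' = z}" using S.finX by simp
      show "x \<in> {x' \<in> configs Xs. gmap g x' = z}" using x by simp
      show "0 < p x" using pos x by simp
      show "\<And>i. i \<in> {x' \<in> configs Xs. gmap g x' = z} \<Longrightarrow> 0 \<le> p i"
        using pos by (auto intro: less_imp_le)
    qed
  qed
  have mrf: "is_MRF E (law_Y Xs g p)"
    unfolding is_MRF_def
  proof (intro allI impI)
    fix i :: 'v and y :: "'v \<Rightarrow> 'b"
    assume P: "law_Y Xs g p (\<lambda>z. \<forall>j. j \<noteq> i \<longrightarrow> z j = y j) > 0"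
    let ?A = "\<lambda>z. \<Prod>C\<in>cliques E \<inter> {C. i \<in> C}. S.U C z"
    let ?B = "\<lambda>z. (\<Prod>C\<in>cliques E - {C. i \<in> C}. S.U C z) / Z"
    show "law_Y Xs g p (\<lambda>z. z i = y i \<and> (\<forall>j. j \<noteq> i \<longrightarrow> z j = y j)) /
          law_Y Xs g p (\<lambda>z. \<forall>j. j \<noteq> i \<longrightarrow> z j = y j) =
          law_Y Xs g p (\<lambda>z. z i = y i \<and> (\<forall>j. E i j \<longrightarrow> z j = y j)) /
          law_Y Xs g p (\<lambda>z. \<forall>j. E i j \<longrightarrow> z j = y j)"
    proof (rule markov_generic[where Ys="?Ys" and q="pmf_Y Xs g p" and A="?A" and B="?B"])
      show "\<And>j. finite (?Ys j)" using fin by simp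
      show "\<not> E i i" by (rule irrefl)
      show "\<And>z. z \<in> configs ?Ys \<Longrightarrow> pmf_Y Xs g p z > 0" by (rule qpos)
      show "pmf_Y Xs g p z = ?A z * ?B z" if "z \<in> configs ?Ys" for z
      proof -
        have "z \<in> gmap g ` configs Xs" unfolding Yeq by (rule that)
    then obtain x where x: "x \<in> configs Xs" "z = gmap g x" by blast
        have "pmf_Y Xs g p z = (\<Prod>C\<in>cliques E. S.U C z) / Z" using pmfY[OF x(1)] x(2) by simp
        also have "(\<Prod>C\<in>cliques E. S.U C z) = ?A z * (\<Prod>C\<in>cliques E - {C. i \<in> C}. S.U C z)"
          by (rule prod.Int_Diff[OF S.fin_cl])
        finally show ?thesis by simp
      qed
      show "?A z = ?A z'" if z: "z \<in> configs ?Ys" and z': "z' \<in> configs ?Ys" and "z' i = z i"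
        and "\<forall>j. E i j \<longrightarrow> z' j = z j" for z z'
      proof (rule prod.cong[OF refl])
        fix C assume C: "C \<in> cliques E \<inter> {C. i \<in> C}"
        have "z j = z' j" if j: "j \<in> C" for j
        proof (cases "j = i")
          case True then show ?thesis using \<open>z' i = z i\<close> by simp
        next
          case False
          then have "E i j" using C j by (auto simp: cliques_def is_clique_def)
          then show ?thesis using \<open>\<forall>j. E i j \<longrightarrow> z' j = z j\<close> by simp
        qed
        then show "S.U C z = S.U C z'" using S.U_locY[of C z z'] C z[folded Yeq] z'[folded Yeq] by auto
      qed
      show "?B z = ?B z'" if z: "z \<in> configs ?Ys" and z': "z' \<in> configs ?Ys"
        and "\<forall>j. j \<noteq> i \<longrightarrow> z' j = z j" for z z'
      proof -
        have "(\<Prod>C\<in>cliques E - {C. i \<in> C}. S.U C z) = (\<Prod>C\<in>cliques E - {C. i \<in> C}. S.U C z')"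
        proof (rule prod.cong[OF refl])
          fix C assume C: "C \<in> cliques E - {C. i \<in> C}"
          have "\<forall>j\<in>C. z j = z' j" using C that(3) by auto
          then show "S.U C z = S.U C z'" using S.U_locY[of C z z'] C z[folded Yeq] z'[folded Yeq] by auto
        qed
        then show ?thesis by simp
      qed
      show "\<And>P. law_Y Xs g p P = (\<Sum>z\<in>configs ?Ys. if P z then pmf_Y Xs g p z else 0)" by (rule lawY)
      show "law_Y Xs g p (\<lambda>z. \<forall>j. j \<noteq> i \<longrightarrow> z j = y j) > 0" by (rule P)
    qed
  qed
  have U1: "\<forall>i. \<forall>x\<in>configs Xs.
          S.U (Cp i) (gmap g x) =
            (\<Sum>x''\<in>{x''\<in>configs Xs. (\<forall>j. Cp j \<noteq> Cp i \<longrightarrow> x'' j = x j) \<and>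
                                    (\<forall>j. Cp j = Cp i \<longrightarrow> g j (x'' j) = g j (x j))}.
               psi (Cp i) x'')"
  proof (intro allI ballI)
    fix i x assume x: "x \<in> configs Xs"
    show "S.U (Cp i) (gmap g x) =
            (\<Sum>x''\<in>{x''\<in>configs Xs. (\<forall>j. Cp j \<noteq> Cp i \<longrightarrow> x'' j = x j) \<and>
                                    (\<forall>j. Cp j = Cp i \<longrightarrow> g j (x'' j) = g j (x j))}.
               psi (Cp i) x'')"
      using S.U_Cp[OF x, of "Cp i"] by (simp add: S.Fib_def)
  qed
  have U2: "\<forall>C\<in>cliques E - range Cp. \<forall>x\<in>configs Xs. S.U C (gmap g x) = psi C x"
    using S.U_nCp by blast
  have U3: "\<forall>y\<in>gmap g ` configs Xs. pmf_Y Xs g p y = (\<Prod>C\<in>cliques E. S.U C y) / Z"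
    using pmfY by auto
  show ?thesis
    apply (rule conjI[OF mrf])
    apply (rule exI[of _ S.U])
    using U1 U2 U3 by (intro conjI)
qed


end
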